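(* Let $\mathcal{F}$ be a complete pointed fan in $\mathbb{R}^2$ with $n\ge3$ regions and profile $\beta(\mathcal{F})=(\beta_0,\dots,\beta_{n-1})$. If $n$ is odd, then $\mathcal{F}$ is virtually inscribable and $\dim\mathrm{InSpc}(\mathcal{F})=1$. If $n$ is even, then $\mathcal{F}$ is virtually inscribable if and only if $\beta_0+\beta_2+\beta_4+\cdots+\beta_{n-2}=\pi$, and in this case $\dim\mathrm{InSpc}(\mathcal{F})=2$.
   Context: The regions $R_0,\dots,R_{n-1}$ of $\mathcal{F}$ are ordered counterclockwise, $\beta_i$ is the angle of $R_i$, and indices are taken modulo $n$. Adjacent regions $R_i,R_{i+1}$ share a ray; $s_{R_iR_{i+1}}$ is the reflection in the line spanned by that ray. For a walk $\mathcal{W}=R_{i_0}\cdots R_{i_k}$ in the cyclic adjacency graph set $t_{\mathcal{W}}=s_{R_{i_k}R_{i_{k-1}}}\cdots s_{R_{i_1}R_{i_0}}$. $\mathrm{InSpc}(\mathcal{F})$ denotes the based inscribed space $\{v\in\mathbb{R}^2: t_{\mathcal{W}}(v)=v$ for all closed walks $\mathcal{W}$ starting at $R_0\}$ (its dimension does not depend on the base region), and $\mathcal{F}$ is virtually inscribable if this space is nonzero. *)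

theory Defs
  imports "HOL-Analysis.Analysis"
begin

text \<open>A complete pointed fan in the plane with n regions is described by the angles
  th 0 < th 1 < ... < th (n-1) < th 0 + 2 pi of its rays, listed counterclockwise.
  Region R_i is the cone between ray i and ray (i+1) mod n; pointedness means every
  region has angle strictly less than pi.\<close>

definition ray_dir :: "(nat \<Rightarrow> real) \<Rightarrow> nat \<Rightarrow> real^2" where
  "ray_dir th i = vector [cos (th i), sin (th i)]"

definition fan_angle :: "nat \<Rightarrow> (nat \<Rightarrow> real) \<Rightarrow> nat \<Rightarrow> real" where
  "fan_angle n th i =
     (let k = i mod n in if Suc k < n then th (Suc k) - th k else th 0 + 2 * pi - th k)"

definition complete_pointed_fan :: "nat \<Rightarrow> (nat \<Rightarrow> real) \<Rightarrow> bool" where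
  "complete_pointed_fan n th \<longleftrightarrow>
     n \<ge> 1 \<and> (\<forall>i. Suc i < n \<longrightarrow> th i < th (Suc i)) \<and> th (n - 1) < th 0 + 2 * pi \<and>
     (\<forall>i<n. fan_angle n th i < pi)"

text \<open>Reflection in the line spanned by a unit vector u.\<close>
definition line_reflection :: "real^2 \<Rightarrow> real^2 \<Rightarrow> real^2" where
  "line_reflection u v = 2 *\<^sub>R (v \<bullet> u) *\<^sub>R u - v"

definition adjacent_regions :: "nat \<Rightarrow> nat \<Rightarrow> nat \<Rightarrow> bool" where
  "adjacent_regions n i j \<longleftrightarrow> i < n \<and> j < n \<and> (j = Suc i mod n \<or> i = Suc j mod n)"

definition shared_ray :: "nat \<Rightarrow> nat \<Rightarrow> nat \<Rightarrow> nat" where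
  "shared_ray n i j = (if j = Suc i mod n then j else i)"

definition region_reflection :: "nat \<Rightarrow> (nat \<Rightarrow> real) \<Rightarrow> nat \<Rightarrow> nat \<Rightarrow> real^2 \<Rightarrow> real^2" where
  "region_reflection n th i j = line_reflection (ray_dir th (shared_ray n i j))"

definition is_walk :: "nat \<Rightarrow> nat list \<Rightarrow> bool" where
  "is_walk n W \<longleftrightarrow> W \<noteq> [] \<and> (\<forall>i\<in>set W. i < n) \<and>
     (\<forall>k. Suc k < length W \<longrightarrow> adjacent_regions n (W ! k) (W ! Suc k))"

text \<open>t_W for W = R_{i_0} ... R_{i_k}: first apply s_{R_{i_1} R_{i_0}}, last s_{R_{i_k} R_{i_{k-1}}}.\<close>
fun walk_map :: "nat \<Rightarrow> (nat \<Rightarrow> real) \<Rightarrow> nat list \<Rightarrow> real^2 \<Rightarrow> real^2" where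
  "walk_map n th (a # b # rest) = walk_map n th (b # rest) \<circ> region_reflection n th b a"
| "walk_map n th _ = id"

definition InSpc :: "nat \<Rightarrow> (nat \<Rightarrow> real) \<Rightarrow> (real^2) set" where
  "InSpc n th = {v. \<forall>W. is_walk n W \<and> hd W = 0 \<and> last W = 0 \<longrightarrow> walk_map n th W v = v}"

definition virtually_inscribable :: "nat \<Rightarrow> (nat \<Rightarrow> real) \<Rightarrow> bool" where
  "virtually_inscribable n th \<longleftrightarrow> InSpc n th \<noteq> {0}"

end

theory Submission
  imports Defs
begin

definition iso :: "bool \<Rightarrow> real \<Rightarrow> real^2 \<Rightarrow> real^2" where
  "iso b p v = (if b then vector [cos p * v$1 + sin p * v$2, sin p * v$1 - cos p * v$2]
                else vector [cos p * v$1 - sin p * v$2, sin p * v$1 + cos p * v$2])"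

lemma vec2_eq: "(x::real^2) = y \<longleftrightarrow> x$1 = y$1 \<and> x$2 = y$2"
  by (metis exhaust_2 vec_eq_iff)

lemma iso_comp: "iso True p (iso b q v) = iso (\<not> b) (p - q) v"
  unfolding iso_def vec2_eq
  by (cases b) (auto simp: cos_diff sin_diff algebra_simps)

lemma iso_id: "iso False 0 v = v"
  unfolding iso_def vec2_eq by simp

lemma iso_invol: "iso True p (iso True p v) = v"
  using iso_comp[of p True p v] iso_id by simp

lemma line_refl_iso: "line_reflection (vector [cos a, sin a]) v = iso True (2*a) v"
proof -
  have c: "cos (2*a) = 2 * (cos a)^2 - 1" "sin (2*a) = 2 * sin a * cos a"
    using cos_double_cos sin_double by auto
  have s: "(sin a)^2 = 1 - (cos a)^2" by (simp add: sin_squared_eq)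
  have k: "cos a * (cos a * z) + sin a * (sin a * z) = z" for z
  proof -
    have "cos a * (cos a * z) + sin a * (sin a * z) = ((sin a)^2 + (cos a)^2) * z"
      unfolding power2_eq_square by (simp only: algebra_simps)
    then show ?thesis by simp
  qed
  show ?thesis
    unfolding line_reflection_def iso_def vec2_eq inner_vec_def sum_2 c
    by (simp add: algebra_simps power2_eq_square s[unfolded power2_eq_square] k)
qed

fun Aang :: "(nat \<Rightarrow> real) \<Rightarrow> nat \<Rightarrow> real" where
  "Aang th 0 = 0"
| "Aang th (Suc j) = 2 * th (Suc j) - Aang th j"

definition gv :: "(nat \<Rightarrow> real) \<Rightarrow> real^2 \<Rightarrow> nat \<Rightarrow> real^2" where
  "gv th v j = iso (odd j) (Aang th j) v"

lemma s_iso: "line_reflection (ray_dir th k) v = iso True (2 * th k) v"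
  unfolding ray_dir_def by (rule line_refl_iso)

lemma gv_0: "gv th v 0 = v"
  by (simp add: gv_def iso_id)

lemma gv_Suc: "line_reflection (ray_dir th (Suc j)) (gv th v j) = gv th v (Suc j)"
  by (simp add: s_iso gv_def iso_comp)

lemma fwd:
  assumes "a < n" and hfix: "line_reflection (ray_dir th 0) (gv th v (n-1)) = v"
  shows "line_reflection (ray_dir th (Suc a mod n)) (gv th v a) = gv th v (Suc a mod n)"
proof (cases "Suc a < n")
  case True
  then show ?thesis using gv_Suc by simp
next
  case False
  then have "Suc a = n" using assms(1) by auto
  then have "a = n - 1" "Suc a mod n = 0" by auto
  then show ?thesis using hfix gv_0 by simp
qed

lemma step:
  assumes "n \<ge> 3" and hfix: "line_reflection (ray_dir th 0) (gv th v (n-1)) = v"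
    and adj: "adjacent_regions n a b"
  shows "region_reflection n th b a (gv th v a) = gv th v b"
proof -
  have an: "a < n" "b < n" using adj unfolding adjacent_regions_def by auto
  show ?thesis
  proof (cases "b = Suc a mod n")
    case True
    have "a \<noteq> Suc b mod n"
    proof
      assume h: "a = Suc b mod n"
      show False
      proof (cases "Suc a < n")
        case True
        then have "b = Suc a" using \<open>b = Suc a mod n\<close> by simp
        show False
        proof (cases "Suc (Suc a) < n")
          case True
          then have "Suc b mod n = Suc (Suc a)" using \<open>b = Suc a\<close> by simp
          then show False using h by linarith
        next
          case False
          then have "Suc (Suc a) = n" using \<open>b = Suc a\<close> an by simp
          then have "Suc b mod n = 0" using \<open>b = Suc a\<close> by simp
          then have "a = 0" using h by linarith
          then show False using \<open>Suc (Suc a) = n\<close> assms(1) by simp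
        qed
      next
        case False
        then have "b = 0" using \<open>b = Suc a mod n\<close> an by (metis Suc_lessI mod_self)
        then have "Suc b mod n = 1" using assms(1) by simp
        then have "a = 1" using h by linarith
        then show False using an assms(1) False by simp
      qed
    qed
    then have "region_reflection n th b a = line_reflection (ray_dir th b)"
      unfolding region_reflection_def shared_ray_def by simp
    then show ?thesis using fwd[OF an(1) hfix] True by simp
  next
    case False
    then have a: "a = Suc b mod n" using adj unfolding adjacent_regions_def by auto
    have "region_reflection n th b a = line_reflection (ray_dir th a)"
      unfolding region_reflection_def shared_ray_def using a by simp
    moreover have "line_reflection (ray_dir th a) (gv th v b) = gv th v a"
      using fwd[OF an(2) hfix] a by simp
    ultimately show ?thesis
      using iso_invol[of "2 * th a" "gv th v b"] by (simp add: s_iso)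
  qed
qed

lemma walk_lemma:
  assumes "n \<ge> 3" and hfix: "line_reflection (ray_dir th 0) (gv th v (n-1)) = v"
  shows "is_walk n W \<Longrightarrow> walk_map n th W (gv th v (hd W)) = gv th v (last W)"
proof (induction W rule: induct_list012)
  case 1
  then show ?case unfolding is_walk_def by simp
next
  case (2 x)
  then show ?case by simp
next
  case (3 a b rest)
  have W: "\<forall>k. Suc k < length (a # b # rest) \<longrightarrow>
      adjacent_regions n ((a # b # rest) ! k) ((a # b # rest) ! Suc k)"
    and S: "\<forall>i\<in>set (a # b # rest). i < n"
    using 3(3) unfolding is_walk_def by blast+
  have w: "is_walk n (b # rest)"
    unfolding is_walk_def
  proof (intro conjI allI impI)
    show "b # rest \<noteq> []" by simp
    show "\<forall>i\<in>set (b # rest). i < n" using S by simp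
    fix k assume "Suc k < length (b # rest)"
    then have "Suc (Suc k) < length (a # b # rest)" by simp
    then have "adjacent_regions n ((a # b # rest) ! Suc k) ((a # b # rest) ! Suc (Suc k))"
      using W by blast
    then show "adjacent_regions n ((b # rest) ! k) ((b # rest) ! Suc k)" by simp
  qed
  have adj: "adjacent_regions n a b"
    using W[rule_format, of 0] by simp
  have "walk_map n th (a # b # rest) (gv th v (hd (a # b # rest)))
      = walk_map n th (b # rest) (gv th v b)"
    using step[OF assms(1) hfix adj] by simp
  also have "\<dots> = gv th v (last (b # rest))" using 3(2)[OF w] by simp
  finally show ?case by simp
qed


lemma walk_snoc: "walk_map n th (xs @ [x, y]) v = region_reflection n th y x (walk_map n th (xs @ [x]) v)"
proof (induction xs arbitrary: v)
  case Nil
  then show ?case by simp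
next
  case (Cons a xs)
  show ?case
  proof (cases xs)
    case Nil
    then show ?thesis by simp
  next
    case (Cons b xs')
    then show ?thesis using Cons.IH by simp
  qed
qed

lemma walk_upt:
  assumes "n \<ge> 3"
  shows "j < n \<Longrightarrow> walk_map n th [0..<Suc j] v = gv th v j"
proof (induction j)
  case 0
  then show ?case by (simp add: gv_0)
next
  case (Suc j)
  have e: "[0..<Suc (Suc j)] = [0..<j] @ [j, Suc j]" by simp
  have "Suc (Suc j) mod n \<noteq> j"
  proof (cases "Suc (Suc j) < n")
    case True
    then show ?thesis by simp
  next
    case False
    then have "Suc (Suc j) = n" using Suc.prems by simp
    then show ?thesis using assms by auto
  qed
  then have "region_reflection n th (Suc j) j = line_reflection (ray_dir th (Suc j))"
    unfolding region_reflection_def shared_ray_def by simp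
  moreover have "walk_map n th ([0..<j] @ [j, Suc j]) v
      = region_reflection n th (Suc j) j (walk_map n th ([0..<j] @ [j]) v)"
    by (rule walk_snoc)
  moreover have "[0..<j] @ [j] = [0..<Suc j]" by simp
  ultimately show ?case
    using Suc gv_Suc by (simp only: e)
qed

lemma InSpc_char:
  assumes "n \<ge> 3"
  shows "InSpc n th = {v. line_reflection (ray_dir th 0) (gv th v (n-1)) = v}"
proof (intro set_eqI iffI)
  fix v assume "v \<in> InSpc n th"
  then have H: "\<And>W. is_walk n W \<Longrightarrow> hd W = 0 \<Longrightarrow> last W = 0 \<Longrightarrow> walk_map n th W v = v"
    unfolding InSpc_def by blast
  define W where "W = [0..<n] @ [0]"
  have n1: "n = Suc (n - 1)" using assms by simp
  have We: "W = [0..<n-1] @ [n-1, 0]"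
    unfolding W_def by (subst n1) simp
  have "is_walk n W"
    unfolding is_walk_def
  proof (intro conjI allI impI)
    show "W \<noteq> []" unfolding W_def by simp
    show "\<forall>i\<in>set W. i < n" unfolding W_def using assms by auto
    fix k assume k: "Suc k < length W"
    then have kn: "k < n" unfolding W_def by simp
    show "adjacent_regions n (W ! k) (W ! Suc k)"
    proof (cases "Suc k < n")
      case True
      then have "W ! k = k" "W ! Suc k = Suc k" unfolding W_def by (simp_all add: nth_append)
      then show ?thesis unfolding adjacent_regions_def using True by simp
    next
      case False
      then have "k = n - 1" using kn by simp
      then have "W ! k = n - 1" "W ! Suc k = 0" unfolding W_def using assms by (simp_all add: nth_append)
      then show ?thesis unfolding adjacent_regions_def using assms by simp
    qed
  qed
  moreover have "hd W = 0" "last W = 0" unfolding W_def using assms by simp_all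
  ultimately have "walk_map n th W v = v" using H by blast
  moreover have "region_reflection n th 0 (n - 1) = line_reflection (ray_dir th 0)"
  proof -
    have "n - 1 \<noteq> Suc 0 mod n" using assms by simp
    then show ?thesis unfolding region_reflection_def shared_ray_def by simp
  qed
  moreover have "walk_map n th ([0..<n-1] @ [n-1]) v = gv th v (n-1)"
  proof -
    have "[0..<n-1] @ [n-1] = [0..<Suc (n-1)]" by simp
    moreover have "n - 1 < n" using assms by simp
    ultimately show ?thesis using walk_upt[OF assms, of "n-1" th v] by simp
  qed
  ultimately show "v \<in> {v. line_reflection (ray_dir th 0) (gv th v (n-1)) = v}"
    unfolding We walk_snoc by simp
next
  fix v assume "v \<in> {v. line_reflection (ray_dir th 0) (gv th v (n-1)) = v}"
  then have hfix: "line_reflection (ray_dir th 0) (gv th v (n-1)) = v" by simp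
  show "v \<in> InSpc n th"
    unfolding InSpc_def
  proof (intro CollectI allI impI)
    fix W assume "is_walk n W \<and> hd W = 0 \<and> last W = 0"
    then show "walk_map n th W v = v"
      using walk_lemma[OF assms hfix, of W] gv_0[of th v] by simp
  qed
qed


lemma T_iso:
  assumes "n \<ge> 1"
  shows "line_reflection (ray_dir th 0) (gv th v (n-1)) = iso (odd n) (2 * th 0 - Aang th (n-1)) v"
proof -
  have "(\<not> odd (n - 1)) = odd n" using assms by (cases n) auto
  then show ?thesis by (simp add: s_iso gv_def iso_comp)
qed

lemma Aang_odd: "Aang th (2*m+1) = 2 * (\<Sum>i<m+1. th (2*i+1) - th (2*i)) + 2 * th 0"
proof (induction m)
  case 0
  then show ?case by simp
next
  case (Suc m)
  have e: "2 * Suc m + 1 = Suc (Suc (2*m+1))" by simp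
  show ?case unfolding e using Suc by simp
qed

lemma refl_fix:
  fixes p :: real
  defines "u \<equiv> vector [cos (p/2), sin (p/2)] :: real^2"
  shows "{v. iso True p v = v} = span {u}" and "u \<noteq> 0"
proof -
  have uu: "u \<bullet> u = 1"
    unfolding u_def inner_vec_def sum_2 by (simp add: power2_eq_square[symmetric])
  have L: "iso True p v = line_reflection u v" for v
    using line_refl_iso[of "p/2" v] unfolding u_def by simp
  show "{v. iso True p v = v} = span {u}"
  proof (intro set_eqI iffI)
    fix v assume "v \<in> {v. iso True p v = v}"
    then have "2 *\<^sub>R (v \<bullet> u) *\<^sub>R u - v = v" using L unfolding line_reflection_def by simp
    then have "2 *\<^sub>R ((v \<bullet> u) *\<^sub>R u) = 2 *\<^sub>R v"
      by (simp add: scaleR_2 algebra_simps)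
    then have "v = (v \<bullet> u) *\<^sub>R u"
      by (metis scaleR_cancel_left zero_neq_numeral)
    then show "v \<in> span {u}" by (simp add: span_singleton)
  next
    fix v assume "v \<in> span {u}"
    then obtain c where v: "v = c *\<^sub>R u" by (auto simp: span_singleton)
    have "v \<bullet> u = c" using uu v by simp
    have "(2::real) *\<^sub>R c *\<^sub>R u - c *\<^sub>R u = c *\<^sub>R u"
      by (simp only: scaleR_2 add_diff_cancel_right')
    moreover have "line_reflection u v = 2 *\<^sub>R c *\<^sub>R u - v"
      unfolding line_reflection_def using \<open>v \<bullet> u = c\<close> by (simp only:)
    ultimately have "line_reflection u v = v" using v by simp
    then show "v \<in> {v. iso True p v = v}" using L by simp
  qed
  show "u \<noteq> 0" using uu by auto
qed

lemma rot_fix1: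
  assumes "cos p = 1" shows "iso False p v = v"
proof -
  have "(sin p)^2 = 0" using sin_cos_squared_add[of p] assms by simp
  then have "sin p = 0" by simp
  then show ?thesis using assms unfolding iso_def vec2_eq by simp
qed

lemma rot_fix2:
  assumes "cos p \<noteq> 1" and "iso False p v = v" shows "v = 0"
proof -
  define x where "x = v$1"
  define y where "y = v$2"
  define cc where "cc = cos p"
  define ss where "ss = sin p"
  have e1: "(cc - 1) * x - ss * y = 0" and e2: "ss * x + (cc - 1) * y = 0"
    using assms(2) unfolding iso_def vec2_eq x_def y_def cc_def ss_def by (auto simp: algebra_simps)
  have d: "(cc - 1) * (cc - 1) + ss * ss \<noteq> 0"
  proof
    assume h: "(cc - 1) * (cc - 1) + ss * ss = 0"
    have "0 \<le> ss * ss" by simp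
    moreover have "0 \<le> (cc - 1) * (cc - 1)" by simp
    ultimately have "(cc - 1) * (cc - 1) = 0" using h by linarith
    then show False using assms(1) unfolding cc_def by simp
  qed
  have "((cc - 1) * (cc - 1) + ss * ss) * x = (cc - 1) * ((cc - 1) * x - ss * y) + ss * (ss * x + (cc - 1) * y)"
    by (simp add: algebra_simps)
  then have "((cc - 1) * (cc - 1) + ss * ss) * x = 0" by (simp only: e1 e2 mult_zero_right add_0)
  then have "x = 0" using d mult_eq_0_iff by blast
  have "((cc - 1) * (cc - 1) + ss * ss) * y = (cc - 1) * (ss * x + (cc - 1) * y) - ss * ((cc - 1) * x - ss * y)"
    by (simp add: algebra_simps)
  then have "((cc - 1) * (cc - 1) + ss * ss) * y = 0" by (simp only: e1 e2 mult_zero_right diff_0)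
  then have "y = 0" using d mult_eq_0_iff by blast
  show "v = 0" using \<open>x = 0\<close> \<open>y = 0\<close> unfolding x_def y_def vec2_eq by simp
qed


lemma sum_bound:
  fixes th :: "nat \<Rightarrow> real"
  assumes inc: "\<And>i. Suc i < n \<Longrightarrow> th i < th (Suc i)"
  shows "2*k+4 \<le> n \<Longrightarrow> (\<Sum>i<k+2. th (2*i+1) - th (2*i)) \<le> th (2*k+3) - th 0 - (th 2 - th 1)"
proof (induction k)
  case 0
  have "(\<Sum>i<0+2. th (2*i+1) - th (2*i)) = th 1 - th 0 + (th 3 - th 2)"
    by (simp add: eval_nat_numeral)
  moreover have "th (2*0+3) = th 3" by simp
  ultimately show ?case by linarith
next
  case (Suc k)
  have IH: "(\<Sum>i<k+2. th (2*i+1) - th (2*i)) \<le> th (2*k+3) - th 0 - (th 2 - th 1)"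
    using Suc by simp
  have "th (2*k+3) < th (Suc (2*k+3))" using inc[of "2*k+3"] Suc.prems by simp
  moreover have "(\<Sum>i<Suc k+2. th (2*i+1) - th (2*i)) = (\<Sum>i<k+2. th (2*i+1) - th (2*i)) + (th (2*Suc k+3) - th (Suc (2*k+3)))"
  proof -
    have e: "Suc k + 2 = Suc (k+2)" by simp
    have a3: "Suc (2*k+3) + 1 = 2*Suc k+3" and a2: "2*(k+2) = Suc (2*k+3)" by simp_all
    show ?thesis unfolding e sum.lessThan_Suc a2 a3 ..
  qed
  ultimately show ?case using IH by linarith
qed

lemma angle_cond:
  assumes "0 < S" "S < 2*pi"
  shows "cos (-2*S) = 1 \<longleftrightarrow> S = pi"
proof
  assume "cos (-2*S) = 1"
  then obtain k :: int where k: "-2*S = of_int k * 2 * pi" using cos_one_2pi_int by blast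
  define j where "j = - k"
  have Sj: "S = of_int j * pi" using k unfolding j_def by (simp add: algebra_simps)
  have "0 < of_int j * pi" using Sj assms by simp
  then have "0 < j" by (simp add: zero_less_mult_iff)
  have "of_int j * pi < 2 * pi" using Sj assms by simp
  then have "of_int j < (2::real)" by simp
  then have "j < 2" by linarith
  then have "j = 1" using \<open>0 < j\<close> by simp
  then show "S = pi" using Sj by simp
next
  assume "S = pi" then show "cos (-2*S) = 1" by simp
qed


theorem proposition3p1:
  fixes n :: nat and th :: "nat \<Rightarrow> real"
  assumes "complete_pointed_fan n th" and "n \<ge> 3"
  shows "(odd n \<longrightarrow> virtually_inscribable n th \<and> dim (InSpc n th) = 1) \<and>
         (even n \<longrightarrow>
            (virtually_inscribable n th \<longleftrightarrow> (\<Sum>i<n div 2. fan_angle n th (2 * i)) = pi) \<and>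
            (virtually_inscribable n th \<longrightarrow> dim (InSpc n th) = 2))"
proof -
  have inc: "\<And>i. Suc i < n \<Longrightarrow> th i < th (Suc i)" and last: "th (n - 1) < th 0 + 2 * pi"
    using assms(1) unfolding complete_pointed_fan_def by auto
  define P where "P = 2 * th 0 - Aang th (n-1)"
  have char: "InSpc n th = {v. iso (odd n) P v = v}"
    unfolding InSpc_char[OF assms(2)] P_def using T_iso[of n th] assms(2) by simp
  have oddcase: "virtually_inscribable n th \<and> dim (InSpc n th) = 1" if "odd n"
  proof -
    define u :: "real^2" where "u = vector [cos (P/2), sin (P/2)]"
    have I: "InSpc n th = span {u}" using char refl_fix(1)[of P] that unfolding u_def by simp
    have u0: "u \<noteq> 0" using refl_fix(2)[of P] unfolding u_def by simp
    have "u \<in> InSpc n th" unfolding I by (simp add: span_base)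
    then have "InSpc n th \<noteq> {0}" using u0 by auto
    moreover have "dim (InSpc n th) = 1" unfolding I dim_span using u0 by simp
    ultimately show ?thesis unfolding virtually_inscribable_def by simp
  qed
  have evencase: "(virtually_inscribable n th \<longleftrightarrow> (\<Sum>i<n div 2. fan_angle n th (2 * i)) = pi) \<and>
            (virtually_inscribable n th \<longrightarrow> dim (InSpc n th) = 2)" if ev: "even n"
  proof -
    define m where "m = n div 2"
    have nm: "n = 2 * m" using ev unfolding m_def by simp
    have m2: "m \<ge> 2" using nm assms(2) by simp
    define S where "S = (\<Sum>i<m. th (2*i+1) - th (2*i))"
    have SS: "(\<Sum>i<n div 2. fan_angle n th (2 * i)) = S"
      unfolding S_def m_def[symmetric]
    proof (rule sum.cong)
      fix i assume "i \<in> {..<m}"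
      then have "2*i < n" "Suc (2*i) < n" using nm by auto
      then show "fan_angle n th (2 * i) = th (2*i+1) - th (2*i)"
        unfolding fan_angle_def Let_def by simp
    qed simp
    have "n - 1 = 2*(m-1)+1" using nm m2 by simp
    then have "Aang th (n-1) = 2 * S + 2 * th 0"
      unfolding S_def using Aang_odd[of th "m-1"] m2 by simp
    then have PS: "P = -2 * S" unfolding P_def by simp
    have Spos: "0 < S" unfolding S_def
    proof (rule sum_pos)
      show "finite {..<m}" by simp
      show "{..<m} \<noteq> {}" using m2 by (simp add: lessThan_empty_iff)
      fix i assume "i \<in> {..<m}"
      then have "Suc (2*i) < n" using nm by auto
      then show "0 < th (2*i+1) - th (2*i)" using inc by simp
    qed
    obtain k where k: "m = k + 2" using m2 by (metis le_add_diff_inverse2)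
    have "2*k+4 \<le> n" using nm k by simp
    from sum_bound[of n th, OF inc this]
    have "S \<le> th (2*k+3) - th 0 - (th 2 - th 1)" unfolding S_def k .
    moreover have "2*k+3 = n - 1" using nm k by simp
    moreover have "th 1 < th 2" using inc[of 1] nm m2 by (simp add: numeral_2_eq_2)
    ultimately have Slt: "S < 2 * pi" using last by simp
    have cosc: "cos P = 1 \<longleftrightarrow> S = pi" unfolding PS using angle_cond[OF Spos Slt] .
    have oddF: "odd n = False" using ev by simp
    show ?thesis
    proof (cases "cos P = 1")
      case True
      have I: "InSpc n th = UNIV" unfolding char oddF using rot_fix1[OF True] by simp
      have "(vector [1, 0] :: real^2) \<noteq> 0" unfolding vec2_eq by simp
      then have "virtually_inscribable n th" unfolding virtually_inscribable_def I by auto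
      moreover have "dim (InSpc n th) = 2" unfolding I dim_UNIV by simp
      ultimately show ?thesis using True cosc SS by simp
    next
      case False
      have I: "InSpc n th = {0}" unfolding char oddF using rot_fix2[OF False] iso_def
        by (auto simp: vec2_eq)
      then have "\<not> virtually_inscribable n th" unfolding virtually_inscribable_def by simp
      then show ?thesis using False cosc SS by simp
    qed
  qed
  show ?thesis using oddcase evencase by blast
qed

end
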